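(* Let $A,B$ be symmetric $m\times m$ real matrices, let $c_1\ge c_2\ge\dots\ge c_m$ be real constants, and let $\sigma$ be a permutation of $\{1,\dots,m\}$. Then $$\sum_{j=1}^m c_{\sigma(j)}\lambda_j(A+B)\le\sum_{j=1}^m c_{\sigma(j)}\lambda_j(A)+\sum_{j=1}^m c_j\lambda_j(B).$$
   Context: For a symmetric $m\times m$ matrix $M$, $\lambda_1(M)\ge\lambda_2(M)\ge\dots\ge\lambda_m(M)$ denote its eigenvalues in decreasing order. *)

theory Defs
  imports "Jordan_Normal_Form.Matrix" "Jordan_Normal_Form.Char_Poly"
begin

text \<open>Indices are 0-based:
  eig A ! (j-1) is lambda_j(A).\<close>
definition eigs_desc :: "real mat \<Rightarrow> real list" where
  "eigs_desc A = (THE xs. sorted_wrt (\<ge>) xs \<and> char_poly A = (\<Prod>a\<leftarrow>xs. [:- a, 1:]))"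

definition eig :: "real mat \<Rightarrow> nat \<Rightarrow> real" where
  "eig A j = eigs_desc A ! j"

end

theory Submission
  imports Defs "Jordan_Normal_Form.Schur_Decomposition"
begin


lemma linfac_mset_eq:
  fixes xs ys :: "'a::idom list"
  assumes "(\<Prod>a\<leftarrow>xs. [:- a, 1:]) = (\<Prod>a\<leftarrow>ys. [:- a, 1:])"
  shows "mset xs = mset ys"
  using assms
proof (induction xs arbitrary: ys)
  case Nil
  have "degree (\<Prod>a\<leftarrow>ys. [:- a, 1:]) = length ys" by (rule degree_linear_factors)
  with Nil show ?case by simp
next
  case (Cons x xs)
  have "poly (\<Prod>a\<leftarrow>ys. [:- a, 1:]) x = 0" using Cons.prems[symmetric] by (simp add: poly_prod_list)
  then have "x \<in> set ys" by (auto simp: poly_prod_list prod_list_zero_iff)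
  then have "(\<Prod>a\<leftarrow>ys. [:- a, 1:]) = [:-x,1:] * (\<Prod>a\<leftarrow>remove1 x ys. [:- a, 1:])"
    by (rule prod_list_map_remove1)
  with Cons.prems have "[:-x,1:] * (\<Prod>a\<leftarrow>xs. [:- a, 1:]) = [:-x,1:] * (\<Prod>a\<leftarrow>remove1 x ys. [:- a, 1:])" by simp
  then have "(\<Prod>a\<leftarrow>xs. [:- a, 1:]) = (\<Prod>a\<leftarrow>remove1 x ys. [:- a, 1:])"
    by (subst (asm) mult_left_cancel) auto
  from Cons.IH[OF this] have "mset xs = mset ys - {#x#}" by (simp add: mset_remove1)
  then show ?case using \<open>x \<in> set ys\<close> by (simp add: insert_DiffM)
qed

lemma sorted_desc_unique:
  fixes xs ys :: "real list"
  assumes "sorted_wrt (\<ge>) xs" "sorted_wrt (\<ge>) ys" "mset xs = mset ys"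
  shows "xs = ys"
proof -
  have "sorted (rev xs)" "sorted (rev ys)" using assms by (simp_all add: sorted_wrt_rev)
  then have "sort (rev ys) = rev xs" "sort (rev ys) = rev ys"
    using assms(3) by (metis mset_rev properties_for_sort)+
  then show ?thesis by simp
qed

lemma eigs_desc_eq:
  assumes "sorted_wrt (\<ge>) xs" "char_poly A = (\<Prod>a\<leftarrow>xs. [:- a, 1:])"
  shows "eigs_desc A = xs"
  unfolding eigs_desc_def
proof (rule the_equality)
  show "sorted_wrt (\<ge>) xs \<and> char_poly A = (\<Prod>a\<leftarrow>xs. [:- a, 1:])" using assms by auto
  fix ys assume "sorted_wrt (\<ge>) ys \<and> char_poly A = (\<Prod>a\<leftarrow>ys. [:- a, 1:])"
  then have "sorted_wrt (\<ge>) ys" "mset ys = mset xs" using assms linfac_mset_eq[of ys xs] by auto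
  then show "ys = xs" using assms(1) sorted_desc_unique by blast
qed

lemma eigs_desc_exists:
  assumes "char_poly A = (\<Prod>a\<leftarrow>rs. [:- a, 1:])"
  shows "sorted_wrt (\<ge>) (eigs_desc A) \<and> char_poly A = (\<Prod>a\<leftarrow>eigs_desc A. [:- a, 1:])
     \<and> mset (eigs_desc A) = mset rs"
proof -
  let ?xs = "rev (sort rs)"
  have s: "sorted_wrt (\<ge>) ?xs" by (simp add: sorted_wrt_rev)
  have m: "mset ?xs = mset rs" by (simp only: mset_rev mset_sort)
  have "(\<Prod>a\<leftarrow>?xs. [:- a, 1:]) = prod_mset (mset (map (\<lambda>a. [:- a, 1:]) ?xs))"
    by (simp only: prod_mset_prod_list)
  also have "mset (map (\<lambda>a. [:- a, 1:]) ?xs) = mset (map (\<lambda>a. [:- a, 1:]) rs)"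
    using m by (simp only: mset_map)
  also have "prod_mset \<dots> = (\<Prod>a\<leftarrow>rs. [:- a, 1:])" by (simp only: prod_mset_prod_list)
  finally have "(\<Prod>a\<leftarrow>?xs. [:- a, 1:]) = (\<Prod>a\<leftarrow>rs. [:- a, 1:])" .
  with assms have c: "char_poly A = (\<Prod>a\<leftarrow>?xs. [:- a, 1:])" by simp
  from eigs_desc_eq[OF s c] s c m show ?thesis by simp
qed



definition diagm :: "nat \<Rightarrow> (nat \<Rightarrow> real) \<Rightarrow> real mat" where
  "diagm n f = mat n n (\<lambda>(i,j). if i = j then f i else 0)"

definition orth :: "nat \<Rightarrow> real mat \<Rightarrow> bool" where
  "orth n U \<longleftrightarrow> U \<in> carrier_mat n n \<and> transpose_mat U * U = 1\<^sub>m n"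

definition sp :: "nat \<Rightarrow> real mat \<Rightarrow> (nat \<Rightarrow> real) \<Rightarrow> real mat" where
  "sp n U f = U * diagm n f * transpose_mat U"

definition tr :: "real mat \<Rightarrow> real" where
  "tr M = (\<Sum>i<dim_row M. M $$ (i,i))"

lemma diagm_carrier[simp]: "diagm n f \<in> carrier_mat n n"
  by (simp add: diagm_def)

lemma orth_right: assumes "orth n U" shows "U * transpose_mat U = 1\<^sub>m n"
  using assms mat_mult_left_right_inverse[of "transpose_mat U" n U] unfolding orth_def by auto

lemma orth_carrier: "orth n U \<Longrightarrow> U \<in> carrier_mat n n" by (simp add: orth_def)

lemma index_mult_sum:
  assumes "A \<in> carrier_mat nr n" "B \<in> carrier_mat n nc" "i < nr" "j < nc"
  shows "(A * B) $$ (i,j) = (\<Sum>k<n. A $$ (i,k) * B $$ (k,j))"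
  using assms by (simp add: scalar_prod_def lessThan_atLeast0)

lemma sp_dims[simp]: "dim_row (sp n U f) = dim_row U" "dim_col (sp n U f) = dim_row U"
  unfolding sp_def by (simp only: index_mult_mat index_transpose_mat)+

lemma sp_carrier[simp]: assumes "U \<in> carrier_mat n n" shows "sp n U f \<in> carrier_mat n n"
proof -
  have "dim_row U = n" using assms by (rule carrier_matD)
  then show ?thesis by (intro carrier_matI) (simp_all only: sp_dims)
qed

lemma sp_index:
  assumes "U \<in> carrier_mat n n" "i < n" "j < n"
  shows "sp n U f $$ (i,j) = (\<Sum>k<n. U $$ (i,k) * f k * U $$ (j,k))"
proof -
  have "sp n U f $$ (i,j) = (\<Sum>k<n. (U * diagm n f) $$ (i,k) * transpose_mat U $$ (k,j))"
    unfolding sp_def by (rule index_mult_sum[of _ n n], insert assms, auto)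
  also have "\<dots> = (\<Sum>k<n. U $$ (i,k) * f k * U $$ (j,k))"
  proof (rule sum.cong[OF refl])
    fix k assume k: "k \<in> {..<n}"
    have "(U * diagm n f) $$ (i,k) = (\<Sum>l<n. U $$ (i,l) * diagm n f $$ (l,k))"
      by (rule index_mult_sum[of _ n n], insert assms k, auto)
    also have "\<dots> = (\<Sum>l<n. if l = k then U $$ (i,k) * f k else 0)"
      by (rule sum.cong, insert k, auto simp: diagm_def)
    also have "\<dots> = U $$ (i,k) * f k" using k by simp
    finally show "(U * diagm n f) $$ (i,k) * transpose_mat U $$ (k,j) = U $$ (i,k) * f k * U $$ (j,k)"
      using assms k by simp
  qed
  finally show ?thesis .
qed

lemma orth_cols:
  assumes "orth n U" "k < n" "l < n"
  shows "(\<Sum>i<n. U $$ (i,k) * U $$ (i,l)) = (if k = l then 1 else 0)"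
proof -
  have "(transpose_mat U * U) $$ (k,l) = (\<Sum>i<n. transpose_mat U $$ (k,i) * U $$ (i,l))"
    by (rule index_mult_sum[of _ n n], insert assms, auto simp: orth_def)
  then show ?thesis using assms by (auto simp: orth_def)
qed

lemma orth_rows:
  assumes "orth n U" "i < n" "j < n"
  shows "(\<Sum>k<n. U $$ (i,k) * U $$ (j,k)) = (if i = j then 1 else 0)"
proof -
  have "(U * transpose_mat U) $$ (i,j) = (\<Sum>k<n. U $$ (i,k) * transpose_mat U $$ (k,j))"
    by (rule index_mult_sum[of _ n n], insert assms, auto simp: orth_def)
  then show ?thesis using assms orth_right[OF assms(1)] by (auto simp: orth_def)
qed

lemma sp_symm: "U \<in> carrier_mat n n \<Longrightarrow> transpose_mat (sp n U f) = sp n U f"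
  by (rule eq_matI, auto simp: sp_index mult.commute mult.left_commute)

lemma sp_add: assumes "U \<in> carrier_mat n n"
  shows "sp n U f + sp n U g = sp n U (\<lambda>k. f k + g k)"
proof (rule eq_matI)
  fix i j assume "i < dim_row (sp n U (\<lambda>k. f k + g k))" "j < dim_col (sp n U (\<lambda>k. f k + g k))"
  then have ij: "i < n" "j < n" using carrier_matD[OF assms] by (simp_all only: sp_dims)
  have "(sp n U f + sp n U g) $$ (i,j) = sp n U f $$ (i,j) + sp n U g $$ (i,j)"
    using ij assms by simp
  also have "\<dots> = sp n U (\<lambda>k. f k + g k) $$ (i,j)"
    unfolding sp_index[OF assms ij] by (simp only: distrib_left distrib_right sum.distrib)
  finally show "(sp n U f + sp n U g) $$ (i,j) = sp n U (\<lambda>k. f k + g k) $$ (i,j)" .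
qed (insert assms, auto)

lemma sp_const: assumes "orth n U"
  shows "sp n U (\<lambda>k. c) = c \<cdot>\<^sub>m 1\<^sub>m n"
proof (rule eq_matI)
  have U: "U \<in> carrier_mat n n" using assms by (simp add: orth_def)
  fix i j assume ij: "i < dim_row (c \<cdot>\<^sub>m 1\<^sub>m n)" "j < dim_col (c \<cdot>\<^sub>m 1\<^sub>m n)"
  then have "sp n U (\<lambda>k. c) $$ (i,j) = c * (\<Sum>k<n. U $$ (i,k) * U $$ (j,k))"
    using U by (simp add: sp_index sum_distrib_left algebra_simps)
  also have "\<dots> = (c \<cdot>\<^sub>m 1\<^sub>m n) $$ (i,j)" using ij orth_rows[OF assms, of i j] by simp
  finally show "sp n U (\<lambda>k. c) $$ (i,j) = (c \<cdot>\<^sub>m 1\<^sub>m n) $$ (i,j)" .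
qed (insert assms, auto simp: orth_def)

lemma tr_sp: assumes "orth n U" shows "tr (sp n U f) = (\<Sum>k<n. f k)"
proof -
  have U: "U \<in> carrier_mat n n" using assms by (simp add: orth_def)
  have "tr (sp n U f) = (\<Sum>i<n. \<Sum>k<n. U $$ (i,k) * f k * U $$ (i,k))"
    unfolding tr_def using U by (auto simp: sp_index intro!: sum.cong)
  also have "\<dots> = (\<Sum>k<n. f k * (\<Sum>i<n. U $$ (i,k) * U $$ (i,k)))"
    by (subst sum.swap, simp add: sum_distrib_left algebra_simps)
  also have "\<dots> = (\<Sum>k<n. f k)" using orth_cols[OF assms] by simp
  finally show ?thesis .
qed

lemma tr_add: "A \<in> carrier_mat n n \<Longrightarrow> B \<in> carrier_mat n n \<Longrightarrow> tr (A + B) = tr A + tr B"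
  by (simp add: tr_def sum.distrib)



lemma sum3_swap: "(\<Sum>i\<in>A. \<Sum>j\<in>B. \<Sum>k\<in>C. F i j k) = (\<Sum>k\<in>C. \<Sum>i\<in>A. \<Sum>j\<in>B. F i j k)"
proof -
  have "(\<Sum>i\<in>A. \<Sum>j\<in>B. \<Sum>k\<in>C. F i j k) = (\<Sum>i\<in>A. \<Sum>k\<in>C. \<Sum>j\<in>B. F i j k)"
    by (rule sum.cong[OF refl], rule sum.swap)
  also have "\<dots> = (\<Sum>k\<in>C. \<Sum>i\<in>A. \<Sum>j\<in>B. F i j k)" by (rule sum.swap)
  finally show ?thesis .
qed

definition coord :: "nat \<Rightarrow> real mat \<Rightarrow> real vec \<Rightarrow> nat \<Rightarrow> real" where
  "coord n U z k = (\<Sum>i<n. U $$ (i,k) * z $ i)"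

lemma qf_sp:
  assumes U: "U \<in> carrier_mat n n" and z: "z \<in> carrier_vec n"
  shows "z \<bullet> (sp n U f *\<^sub>v z) = (\<Sum>k<n. f k * (coord n U z k)^2)"
proof -
  have "z \<bullet> (sp n U f *\<^sub>v z) = (\<Sum>i<n. z $ i * (sp n U f *\<^sub>v z) $ i)"
    using U z by (simp add: scalar_prod_def lessThan_atLeast0)
  also have "\<dots> = (\<Sum>i<n. z $ i * (\<Sum>j<n. sp n U f $$ (i,j) * z $ j))"
    by (rule sum.cong[OF refl], insert U z, auto simp: index_mult_mat_vec scalar_prod_def lessThan_atLeast0)
  also have "\<dots> = (\<Sum>i<n. \<Sum>j<n. \<Sum>k<n. f k * ((U $$ (i,k) * z $ i) * (U $$ (j,k) * z $ j)))"
  proof (rule sum.cong[OF refl])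
    fix i assume i: "i \<in> {..<n}"
    have "z $ i * (\<Sum>j<n. sp n U f $$ (i,j) * z $ j) = (\<Sum>j<n. z $ i * (sp n U f $$ (i,j) * z $ j))"
      by (rule sum_distrib_left)
    also have "\<dots> = (\<Sum>j<n. \<Sum>k<n. f k * ((U $$ (i,k) * z $ i) * (U $$ (j,k) * z $ j)))"
    proof (rule sum.cong[OF refl])
      fix j assume j: "j \<in> {..<n}"
      have "z $ i * (sp n U f $$ (i,j) * z $ j) = z $ i * ((\<Sum>k<n. U $$ (i,k) * f k * U $$ (j,k)) * z $ j)"
        using i j U by (simp add: sp_index)
      also have "\<dots> = (\<Sum>k<n. z $ i * (U $$ (i,k) * f k * U $$ (j,k) * z $ j))"
        by (simp only: sum_distrib_left sum_distrib_right)
      also have "\<dots> = (\<Sum>k<n. f k * ((U $$ (i,k) * z $ i) * (U $$ (j,k) * z $ j)))"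
        by (rule sum.cong[OF refl], simp only: mult_ac)
      finally show "z $ i * (sp n U f $$ (i,j) * z $ j) = \<dots>" .
    qed
    finally show "z $ i * (\<Sum>j<n. sp n U f $$ (i,j) * z $ j) = (\<Sum>j<n. \<Sum>k<n. f k * ((U $$ (i,k) * z $ i) * (U $$ (j,k) * z $ j)))" .
  qed
  also have "\<dots> = (\<Sum>k<n. \<Sum>i<n. \<Sum>j<n. f k * ((U $$ (i,k) * z $ i) * (U $$ (j,k) * z $ j)))"
    by (rule sum3_swap)
  also have "\<dots> = (\<Sum>k<n. f k * ((\<Sum>i<n. U $$ (i,k) * z $ i) * (\<Sum>j<n. U $$ (j,k) * z $ j)))"
    by (rule sum.cong[OF refl], subst sum_product, simp only: sum_distrib_left)
  finally show ?thesis by (simp add: coord_def power2_eq_square)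
qed

lemma coord_norm:
  assumes "orth n U" and z: "z \<in> carrier_vec n"
  shows "(\<Sum>k<n. (coord n U z k)^2) = z \<bullet> z"
proof -
  have U: "U \<in> carrier_mat n n" using assms by (simp add: orth_def)
  have "sp n U (\<lambda>k. 1) = 1\<^sub>m n"
  proof (rule eq_matI)
    fix i j assume "i < dim_row (1\<^sub>m n)" "j < dim_col (1\<^sub>m n)"
    then show "sp n U (\<lambda>k. 1) $$ (i,j) = 1\<^sub>m n $$ (i,j)" using U orth_rows[OF assms(1), of i j]
      by (simp add: sp_index)
  qed (insert U, auto)
  then have e: "z \<bullet> (sp n U (\<lambda>k. 1) *\<^sub>v z) = z \<bullet> z" using z by simp
  have "(\<Sum>k<n. (coord n U z k)^2) = (\<Sum>k<n. 1 * (coord n U z k)^2)" by simp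
  also have "\<dots> = z \<bullet> (sp n U (\<lambda>k. 1) *\<^sub>v z)" by (rule qf_sp[OF U z, symmetric])
  also have "\<dots> = z \<bullet> z" by (rule e)
  finally show ?thesis .
qed



lemma real_cscalar: "(v :: real vec) \<bullet>c w = v \<bullet> w"
  by (simp add: scalar_prod_def)

lemma real_self_scalar_nonneg: "0 \<le> (v :: real vec) \<bullet> v"
  by (simp add: scalar_prod_def sum_nonneg)

lemma orth_colsI:
  assumes W: "W \<in> carrier_mat n n" and c: "\<And>i j. i < n \<Longrightarrow> j < n \<Longrightarrow> col W i \<bullet> col W j = (if i = j then 1 else 0)"
  shows "orth n W"
  unfolding orth_def
proof (intro conjI W eq_matI)
  fix i j assume "i < dim_row (1\<^sub>m n)" "j < dim_col (1\<^sub>m n)"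
  then show "(transpose_mat W * W) $$ (i,j) = 1\<^sub>m n $$ (i,j)" using W c by simp
qed (insert W, auto)

lemma onb_exists:
  assumes u: "u \<in> carrier_vec n" and uu: "u \<bullet> u = 1"
  shows "\<exists>W. orth n W \<and> col W 0 = u"
proof -
  have u0: "u \<noteq> 0\<^sub>v n" using uu by auto
  have n: "n \<noteq> 0"
  proof
    assume "n = 0" then show False using u uu by (simp add: scalar_prod_def)
  qed
  interpret cof_vec_space n "TYPE(real)" .
  define b where "b = basis_completion u"
  from basis_completion[OF u u0, folded b_def]
  have dist_b: "distinct b" and indep: "\<not> lin_dep (set b)" and b: "set b \<subseteq> carrier_vec n" 
    and hdb: "hd b = u" and len_b: "length b = n" by auto
  from hdb len_b n obtain vs where bv: "b = u # vs" by (cases b, auto)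
  define ws where "ws = gram_schmidt n b"
  from gram_schmidt_result[OF b dist_b indep refl, folded ws_def]
  have ws: "set ws \<subseteq> carrier_vec n" "corthogonal ws" "length ws = n" 
    by (auto simp: len_b)
  from gram_schmidt_hd[OF u, of vs, folded bv] have hdws: "hd ws = u" unfolding ws_def .
  define c where "c = (\<lambda>w::real vec. 1 / sqrt (w \<bullet> w))"
  define ws' where "ws' = map (\<lambda>w. c w \<cdot>\<^sub>v w) ws"
  define W where "W = mat_of_cols n ws'"
  have ws'n: "length ws' = n" using ws by (simp add: ws'_def)
  have ws'c: "\<And>i. i < n \<Longrightarrow> ws' ! i \<in> carrier_vec n" using ws by (auto simp: ws'_def)
  have Wc: "W \<in> carrier_mat n n" unfolding W_def using mat_of_cols_carrier(1)[of n ws'] ws'n by simp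
  have colW: "\<And>i. i < n \<Longrightarrow> col W i = ws' ! i" unfolding W_def using ws'n ws'c
    by (simp add: col_mat_of_cols)
  have wsi: "\<And>i. i < n \<Longrightarrow> ws ! i \<in> carrier_vec n" using ws by auto
  have orth_ws: "\<And>i j. i < n \<Longrightarrow> j < n \<Longrightarrow> (ws ! i \<bullet> ws ! j = 0) = (i \<noteq> j)"
    using corthogonalD[OF ws(2)] ws(3) by (simp add: real_cscalar)
  show ?thesis
  proof (intro exI conjI)
    show "orth n W"
    proof (rule orth_colsI[OF Wc])
      fix i j assume i: "i < n" and j: "j < n"
      have "col W i \<bullet> col W j = c (ws ! i) * c (ws ! j) * (ws ! i \<bullet> ws ! j)"
        using i j ws colW wsi smult_scalar_prod_distrib[OF wsi[OF i] smult_carrier_vec[THEN iffD2, OF wsi[OF j]]]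
          scalar_prod_smult_distrib[OF wsi[OF i] wsi[OF j]] by (simp add: ws'_def mult.assoc)
      also have "\<dots> = (if i = j then 1 else 0)"
      proof (cases "i = j")
        case True
        have pos: "ws ! i \<bullet> ws ! i > 0" using orth_ws[OF i i] real_self_scalar_nonneg[of "ws ! i"] by simp
        then show ?thesis using True by (simp add: c_def)
      next
        case False then show ?thesis using orth_ws[OF i j] by simp
      qed
      finally show "col W i \<bullet> col W j = (if i = j then 1 else 0)" .
    qed
    have ws0: "ws ! 0 = u" using hdws ws(3) n by (cases ws, auto)
    show "col W 0 = u" using colW[of 0] n ws0 uu ws(3) by (simp add: ws'_def c_def)
  qed
qed



lemma orth_mult: assumes "orth n W" "orth n V" shows "orth n (W * V)"
proof -
  have W: "W \<in> carrier_mat n n" and V: "V \<in> carrier_mat n n" using assms by (auto simp: orth_def)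
  have "transpose_mat (W * V) * (W * V) = transpose_mat V * (transpose_mat W * W) * V"
    using W V by (simp add: transpose_mult[OF W V] assoc_mult_mat[of _ n n _ n _ n])
  also have "\<dots> = 1\<^sub>m n" using assms V by (simp add: orth_def)
  finally show ?thesis using W V by (simp add: orth_def)
qed

definition ext1 :: "nat \<Rightarrow> real mat \<Rightarrow> real mat" where
  "ext1 n U = mat (Suc n) (Suc n) (\<lambda>(i,j). if i = 0 \<and> j = 0 then 1 else if i = 0 \<or> j = 0 then 0 else U $$ (i-1, j-1))"

lemma ext1_dims[simp]: "dim_row (ext1 n U) = Suc n" "dim_col (ext1 n U) = Suc n"
  by (simp_all add: ext1_def)

lemma ext1_carrier[simp]: "ext1 n U \<in> carrier_mat (Suc n) (Suc n)"
  by (simp add: ext1_def)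

lemma orth_ext1: assumes "orth n U" shows "orth (Suc n) (ext1 n U)"
proof -
  have U: "U \<in> carrier_mat n n" using assms by (simp add: orth_def)
  show ?thesis unfolding orth_def
  proof (intro conjI ext1_carrier eq_matI)
    fix i j assume ij: "i < dim_row (1\<^sub>m (Suc n))" "j < dim_col (1\<^sub>m (Suc n))"
    then have i: "i < Suc n" and j: "j < Suc n" by auto
    have "(transpose_mat (ext1 n U) * ext1 n U) $$ (i,j) = (\<Sum>k<Suc n. transpose_mat (ext1 n U) $$ (i,k) * ext1 n U $$ (k,j))"
      by (rule index_mult_sum[of _ "Suc n" "Suc n" _ "Suc n"], insert i j, auto)
    also have "\<dots> = (\<Sum>k<Suc n. ext1 n U $$ (k,i) * ext1 n U $$ (k,j))"
      by (rule sum.cong[OF refl], insert i, simp)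
    also have "\<dots> = ext1 n U $$ (0,i) * ext1 n U $$ (0,j) + (\<Sum>k<n. ext1 n U $$ (Suc k,i) * ext1 n U $$ (Suc k,j))"
      by (rule sum.lessThan_Suc_shift)
    also have "\<dots> = 1\<^sub>m (Suc n) $$ (i,j)"
    proof (cases "i = 0 \<or> j = 0")
      case True
      then show ?thesis using i j by (auto simp: ext1_def)
    next
      case False
      then obtain i' j' where ii: "i = Suc i'" and jj: "j = Suc j'" by (cases i; cases j) auto
      have "(\<Sum>k<n. ext1 n U $$ (Suc k,i) * ext1 n U $$ (Suc k,j)) = (\<Sum>k<n. U $$ (k,i') * U $$ (k,j'))"
        by (rule sum.cong, insert i j ii jj, auto simp: ext1_def)
      also have "\<dots> = (if i' = j' then 1 else 0)" using orth_cols[OF assms, of i' j'] i j ii jj by simp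
      finally show ?thesis using i j ii jj by (simp add: ext1_def)
    qed
    finally show "(transpose_mat (ext1 n U) * ext1 n U) $$ (i,j) = 1\<^sub>m (Suc n) $$ (i,j)" .
  qed auto
qed

lemma sp_ext1:
  assumes U: "U \<in> carrier_mat n n"
  and i: "i < Suc n" and j: "j < Suc n"
  shows "sp (Suc n) (ext1 n U) f $$ (i,j) = (if i = 0 \<and> j = 0 then f 0 else if i = 0 \<or> j = 0 then 0
     else sp n U (\<lambda>k. f (Suc k)) $$ (i - 1, j - 1))"
proof -
  have "sp (Suc n) (ext1 n U) f $$ (i,j) = (\<Sum>k<Suc n. ext1 n U $$ (i,k) * f k * ext1 n U $$ (j,k))"
    by (rule sp_index[OF ext1_carrier i j])
  also have "\<dots> = ext1 n U $$ (i,0) * f 0 * ext1 n U $$ (j,0) + (\<Sum>k<n. ext1 n U $$ (i,Suc k) * f (Suc k) * ext1 n U $$ (j,Suc k))"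
    by (rule sum.lessThan_Suc_shift)
  also have "\<dots> = (if i = 0 \<and> j = 0 then f 0 else if i = 0 \<or> j = 0 then 0
     else sp n U (\<lambda>k. f (Suc k)) $$ (i - 1, j - 1))"
  proof (cases "i = 0 \<or> j = 0")
    case True
    then show ?thesis using i j by (auto simp: ext1_def)
  next
    case False
    then obtain i' j' where ii: "i = Suc i'" and jj: "j = Suc j'" by (cases i; cases j) auto
    have "(\<Sum>k<n. ext1 n U $$ (i,Suc k) * f (Suc k) * ext1 n U $$ (j,Suc k)) = (\<Sum>k<n. U $$ (i',k) * f (Suc k) * U $$ (j',k))"
      by (rule sum.cong, insert i j ii jj, auto simp: ext1_def)
    also have "\<dots> = sp n U (\<lambda>k. f (Suc k)) $$ (i', j')" using i j ii jj by (simp add: sp_index[OF U])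
    finally show ?thesis using i j ii jj by (simp add: ext1_def)
  qed
  finally show ?thesis .
qed



lemma real_self_scalar_pos: assumes "v \<in> carrier_vec n" "v \<noteq> 0\<^sub>v n" shows "(v :: real vec) \<bullet> v > 0"
proof -
  have "v \<bullet> v \<noteq> 0" using conjugate_square_eq_0_vec[OF assms(1)] assms(2) by (simp add: real_cscalar)
  then show ?thesis using real_self_scalar_nonneg[of v] by simp
qed

lemma orth_col_scalar:
  assumes "orth n W" "i < n" "j < n"
  shows "col W i \<bullet> col W j = (if i = j then 1 else 0)"
proof -
  have W: "W \<in> carrier_mat n n" using assms by (simp add: orth_def)
  have "(transpose_mat W * W) $$ (i,j) = col W i \<bullet> col W j" using W assms by simp
  then show ?thesis using assms by (simp add: orth_def)
qed

lemma sp_mult: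
  assumes W: "W \<in> carrier_mat n n" and E: "E \<in> carrier_mat n n"
  shows "sp n (W * E) f = W * sp n E f * transpose_mat W"
proof -
  have "sp n (W * E) f = W * E * diagm n f * (transpose_mat E * transpose_mat W)"
    unfolding sp_def using transpose_mult[OF W E] by simp
  also have "\<dots> = W * (E * diagm n f * transpose_mat E) * transpose_mat W"
    using W E by (simp add: assoc_mult_mat[of _ n n _ n _ n] mult_carrier_mat[of _ n n _ n])
  finally show ?thesis unfolding sp_def .
qed

lemma spectral_aux:
  fixes es :: "real list"
  shows "A \<in> carrier_mat n n \<Longrightarrow> transpose_mat A = A \<Longrightarrow> char_poly A = (\<Prod>a\<leftarrow>es. [:- a, 1:])
    \<Longrightarrow> \<exists>U. orth n U \<and> A = sp n U (\<lambda>i. es ! i)"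
proof (induction es arbitrary: n A)
  case Nil
  have n: "n = 0" using degree_monic_char_poly[OF Nil(1)] Nil(3) by simp
  show ?case
  proof (intro exI conjI)
    show "orth n (1\<^sub>m n)" by (simp add: orth_def)
    show "A = sp n (1\<^sub>m n) (\<lambda>i. [] ! i)" by (rule eq_matI, insert Nil(1) n, auto)
  qed
next
  case (Cons e es n A)
  note A = Cons.prems(1) and sym = Cons.prems(2)
  have cp: "char_poly A = [:-e,1:] * (\<Prod>a\<leftarrow>es. [:- a, 1:])" using Cons.prems(3) by simp
  have "degree (char_poly A) = Suc (length es)" using Cons.prems(3) degree_linear_factors[of uminus "e#es"] by simp
  then have nn: "n = Suc (length es)" using degree_monic_char_poly[OF A] by simp
  define n1 where "n1 = length es"
  have n: "n = Suc n1" using nn n1_def by simp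
  have ev: "eigenvalue A e" unfolding eigenvalue_root_char_poly[OF A] cp by simp
  then obtain v where "eigenvector A v e" unfolding eigenvalue_def by auto
  then have v: "v \<in> carrier_vec n" "v \<noteq> 0\<^sub>v n" and Av: "A *\<^sub>v v = e \<cdot>\<^sub>v v"
    using A unfolding eigenvector_def by auto
  have vpos: "v \<bullet> v > 0" by (rule real_self_scalar_pos[OF v])
  define c where "c = 1 / sqrt (v \<bullet> v)"
  define u where "u = c \<cdot>\<^sub>v v"
  have u: "u \<in> carrier_vec n" using v by (simp add: u_def)
  have uu: "u \<bullet> u = 1" using v vpos by (simp add: u_def c_def)
  have Au: "A *\<^sub>v u = e \<cdot>\<^sub>v u" unfolding u_def mult_mat_vec[OF A v(1)] Av by (simp add: smult_smult_assoc mult.commute)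
  obtain W where orthW: "orth n W" and W0: "col W 0 = u" using onb_exists[OF u uu] by auto
  have W: "W \<in> carrier_mat n n" using orthW by (simp add: orth_def)
  have WWt: "W * transpose_mat W = 1\<^sub>m n" by (rule orth_right[OF orthW])
  have WtW: "transpose_mat W * W = 1\<^sub>m n" using orthW by (simp add: orth_def)
  define A' where "A' = transpose_mat W * A * W"
  have A': "A' \<in> carrier_mat n n" using W A by (simp add: A'_def)
  have A'idx: "A' $$ (i,j) = col W i \<bullet> (A *\<^sub>v col W j)" if "i < n" "j < n" for i j
  proof -
    have "A' = transpose_mat W * (A * W)" unfolding A'_def using W A by simp
    then have "A' $$ (i,j) = row (transpose_mat W) i \<bullet> col (A * W) j" using that W A by simp
    also have "row (transpose_mat W) i = col W i" using that W by simp
    also have "col (A * W) j = A *\<^sub>v col W j" by (rule col_mult2[OF A W that(2)])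
    finally show ?thesis .
  qed
  have A'0: "A' $$ (i,0) = (if i = 0 then e else 0)" if "i < n" for i
  proof -
    have "A' $$ (i,0) = col W i \<bullet> (e \<cdot>\<^sub>v col W 0)" using A'idx[OF that, of 0] n W0 Au by simp
    also have "\<dots> = e * (col W i \<bullet> col W 0)" using W that n by simp
    finally show ?thesis using orth_col_scalar[OF orthW that, of 0] n by simp
  qed
  have A'sym: "transpose_mat A' = A'"
  proof -
    have "transpose_mat A' = transpose_mat W * transpose_mat (transpose_mat W * A)"
      unfolding A'_def using transpose_mult[of "transpose_mat W * A" n n W n] W A by simp
    also have "\<dots> = transpose_mat W * (A * W)" using transpose_mult[of "transpose_mat W" n n A n] W A sym by simp
    also have "\<dots> = A'" unfolding A'_def using W A by simp
    finally show ?thesis .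
  qed
  have A'0': "A' $$ (0,j) = (if j = 0 then e else 0)" if "j < n" for j
  proof -
    have "A' $$ (0,j) = transpose_mat A' $$ (j,0)" using A' that n by simp
    then show ?thesis using A'sym A'0[OF that] by simp
  qed
  define A3 where "A3 = mat n1 n1 (\<lambda>(i,j). A' $$ (Suc i, Suc j))"
  have A3: "A3 \<in> carrier_mat n1 n1" by (simp add: A3_def)
  define A1 where "A1 = mat 1 1 (\<lambda>_. e)"
  have A1: "A1 \<in> carrier_mat 1 1" by (simp add: A1_def)
  have blk: "A' = four_block_mat A1 (0\<^sub>m 1 n1) (0\<^sub>m n1 1) A3"
  proof (rule eq_matI)
    fix i j assume "i < dim_row (four_block_mat A1 (0\<^sub>m 1 n1) (0\<^sub>m n1 1) A3)" "j < dim_col (four_block_mat A1 (0\<^sub>m 1 n1) (0\<^sub>m n1 1) A3)"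
    then have i: "i < Suc n1" and j: "j < Suc n1" using A1 A3 by auto
    show "A' $$ (i,j) = four_block_mat A1 (0\<^sub>m 1 n1) (0\<^sub>m n1 1) A3 $$ (i,j)"
    proof (cases "i = 0 \<or> j = 0")
      case True
      then show ?thesis using i j A'0 A'0' n A1 A3 by (auto simp: A1_def)
    next
      case False
      then obtain i' j' where ii: "i = Suc i'" and jj: "j = Suc j'" by (cases i; cases j) auto
      then show ?thesis using i j A1 A3 by (simp add: A3_def)
    qed
  qed (insert A' A1 A3 n, auto)
  have sim: "similar_mat A' A"
    unfolding similar_mat_def similar_mat_wit_def
    by (rule exI[of _ "transpose_mat W"], rule exI[of _ W], insert A A' W WWt WtW, auto simp: A'_def Let_def)
  have cpA1: "char_poly A1 = [:-e,1:]"
    by (simp add: A1_def char_poly_defs det_def sign_def)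
  have "char_poly A = char_poly A'" using char_poly_similar[OF sim] by simp
  also have "\<dots> = char_poly A1 * char_poly A3" unfolding blk
    by (rule char_poly_four_block_zeros_col[OF A1 _ A3], simp)
  finally have "[:-e,1:] * char_poly A3 = [:-e,1:] * (\<Prod>a\<leftarrow>es. [:- a, 1:])" using cp cpA1 by simp
  then have cp3: "char_poly A3 = (\<Prod>a\<leftarrow>es. [:- a, 1:])"
    by (subst (asm) mult_left_cancel) auto
  have sym3: "transpose_mat A3 = A3"
  proof (rule eq_matI)
    fix i j assume "i < dim_row A3" "j < dim_col A3"
    then have i: "i < n1" and j: "j < n1" using A3 by auto
    have "A' $$ (Suc j, Suc i) = transpose_mat A' $$ (Suc i, Suc j)" using i j A' n by simp
    then show "transpose_mat A3 $$ (i,j) = A3 $$ (i,j)" using i j A'sym by (simp add: A3_def)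
  qed (insert A3, auto)
  from Cons.IH[OF A3 sym3 cp3] obtain U3 where orth3: "orth n1 U3" and A3U: "A3 = sp n1 U3 (\<lambda>i. es ! i)" by auto
  have U3: "U3 \<in> carrier_mat n1 n1" using orth3 by (simp add: orth_def)
  define U where "U = W * ext1 n1 U3"
  have orthU: "orth n U" unfolding U_def n by (rule orth_mult[OF orthW[unfolded n] orth_ext1[OF orth3]])
  have A'sp: "A' = sp n (ext1 n1 U3) (\<lambda>i. (e # es) ! i)"
  proof (rule eq_matI)
    fix i j assume "i < dim_row (sp n (ext1 n1 U3) (\<lambda>i. (e # es) ! i))" "j < dim_col (sp n (ext1 n1 U3) (\<lambda>i. (e # es) ! i))"
    then have i: "i < Suc n1" and j: "j < Suc n1" by auto
    show "A' $$ (i,j) = sp n (ext1 n1 U3) (\<lambda>i. (e # es) ! i) $$ (i,j)"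
      unfolding n sp_ext1[OF U3 i j]
    proof (cases "i = 0 \<or> j = 0")
      case True
      then show "A' $$ (i,j) = (if i = 0 \<and> j = 0 then (e # es) ! 0 else if i = 0 \<or> j = 0 then 0 else 
        sp n1 U3 (\<lambda>k. (e # es) ! Suc k) $$ (i - 1, j - 1))" using i j A'0 A'0' n by auto
    next
      case False
      then obtain i' j' where ii: "i = Suc i'" and jj: "j = Suc j'" by (cases i; cases j) auto
      have "A' $$ (i,j) = A3 $$ (i',j')" using i j ii jj by (simp add: A3_def)
      then show "A' $$ (i,j) = (if i = 0 \<and> j = 0 then (e # es) ! 0 else if i = 0 \<or> j = 0 then 0 else 
        sp n1 U3 (\<lambda>k. (e # es) ! Suc k) $$ (i - 1, j - 1))" using ii jj A3U by simp
    qed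
  qed (insert A' n, auto)
  have "A = W * A' * transpose_mat W"
  proof -
    have "W * A' * transpose_mat W = (W * transpose_mat W) * A * (W * transpose_mat W)"
      unfolding A'_def using W A by (simp add: assoc_mult_mat[of _ n n _ n _ n])
    then show ?thesis using WWt A by simp
  qed
  also have "\<dots> = sp n U (\<lambda>i. (e # es) ! i)" unfolding U_def A'sp
    by (rule sp_mult[symmetric, OF W], simp add: n)
  finally show ?case using orthU by auto
qed



lemma real_eigenvalue_of_symmetric:
  fixes A :: "real mat" and a :: complex
  assumes A: "A \<in> carrier_mat n n" and sym: "transpose_mat A = A"
    and ev: "eigenvalue (map_mat complex_of_real A) a"
  shows "Im a = 0"
proof -
  let ?A = "map_mat complex_of_real A"
  obtain v where "eigenvector ?A v a" using ev unfolding eigenvalue_def by auto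
  then have v: "v \<in> carrier_vec n" "v \<noteq> 0\<^sub>v n" and Av: "?A *\<^sub>v v = a \<cdot>\<^sub>v v"
    using A unfolding eigenvector_def by auto
  have Aij: "A $$ (i,j) = A $$ (j,i)" if "i < n" "j < n" for i j
  proof -
    have "transpose_mat A $$ (i,j) = A $$ (j,i)" using A that by simp
    then show ?thesis using sym by simp
  qed
  have Avi: "(\<Sum>j<n. complex_of_real (A $$ (i,j)) * v $ j) = a * v $ i" if "i < n" for i
  proof -
    have "(?A *\<^sub>v v) $ i = (\<Sum>j<n. complex_of_real (A $$ (i,j)) * v $ j)"
      using A v that by (simp add: scalar_prod_def lessThan_atLeast0)
    then show ?thesis using Av that v by simp
  qed
  define s where "s = (\<Sum>i<n. \<Sum>j<n. complex_of_real (A $$ (i,j)) * (cnj (v $ i) * v $ j))"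
  define N where "N = (\<Sum>i<n. cnj (v $ i) * v $ i)"
  have sN: "s = a * N"
  proof -
    have "s = (\<Sum>i<n. cnj (v $ i) * (\<Sum>j<n. complex_of_real (A $$ (i,j)) * v $ j))"
      unfolding s_def by (simp add: sum_distrib_left mult_ac)
    also have "\<dots> = (\<Sum>i<n. cnj (v $ i) * (a * v $ i))" by (rule sum.cong, simp_all add: Avi)
    also have "\<dots> = a * N" unfolding N_def by (simp add: sum_distrib_left mult_ac)
    finally show ?thesis .
  qed
  have cs: "cnj s = s"
  proof -
    have "cnj s = (\<Sum>i<n. \<Sum>j<n. complex_of_real (A $$ (i,j)) * (v $ i * cnj (v $ j)))"
      unfolding s_def by (simp add: cnj_sum)
    also have "\<dots> = (\<Sum>j<n. \<Sum>i<n. complex_of_real (A $$ (i,j)) * (v $ i * cnj (v $ j)))"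
      by (rule sum.swap)
    also have "\<dots> = s" unfolding s_def
      by (rule sum.cong[OF refl], rule sum.cong[OF refl], simp add: Aij mult_ac)
    finally show ?thesis .
  qed
  have NR: "N = complex_of_real (\<Sum>i<n. (cmod (v $ i))^2)"
    unfolding N_def of_real_sum
  proof (rule sum.cong[OF refl])
    fix i show "cnj (v $ i) * v $ i = complex_of_real ((cmod (v $ i))^2)"
      using complex_norm_square[of "v $ i"] by (simp add: mult.commute)
  qed
  have "N \<noteq> 0"
  proof
    assume "N = 0"
    then have "(\<Sum>i<n. (cmod (v $ i))^2) = 0" using NR by (metis of_real_eq_0_iff)
    then have "\<forall>i\<in>{..<n}. (cmod (v $ i))^2 = 0" by (subst (asm) sum_nonneg_eq_0_iff) auto
    then have "v = 0\<^sub>v n" using v(1) by (intro eq_vecI) auto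
    with v(2) show False by simp
  qed
  have "cnj N = N" using NR by simp
  have "cnj a * N = a * N" using cs sN \<open>cnj N = N\<close> by (metis complex_cnj_mult)
  then have "cnj a = a" using \<open>N \<noteq> 0\<close> by simp
  then show ?thesis by (metis Reals_cnj_iff complex_is_Real_iff)
qed

lemma symmetric_splits:
  fixes A :: "real mat"
  assumes A: "A \<in> carrier_mat n n" and sym: "transpose_mat A = A"
  shows "\<exists>rs. char_poly A = (\<Prod>a\<leftarrow>rs. [:- a, 1:])"
proof -
  let ?A = "map_mat complex_of_real A"
  have A': "?A \<in> carrier_mat n n" using A by simp
  obtain as where cas: "char_poly ?A = (\<Prod>a\<leftarrow>as. [:- a, 1:])"
    using char_poly_factorized[OF A'] by auto
  have re: "Im a = 0" if "a \<in> set as" for a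
  proof -
    have "poly (char_poly ?A) a = 0" unfolding cas using that
      by (auto simp: poly_prod_list prod_list_zero_iff)
    then have "eigenvalue ?A a" using eigenvalue_root_char_poly[OF A'] by simp
    then show ?thesis by (rule real_eigenvalue_of_symmetric[OF A sym])
  qed
  define rs where "rs = map Re as"
  have asr: "as = map complex_of_real rs" unfolding rs_def
    by (rule nth_equalityI, auto simp: re complex_eq_iff)
  interpret R: map_poly_inj_comm_ring_hom "complex_of_real" ..
  have "map_poly complex_of_real (char_poly A) = char_poly ?A"
    by (rule of_real_hom.char_poly_hom[OF A, symmetric])
  also have "\<dots> = (\<Prod>a\<leftarrow>rs. [:- complex_of_real a, 1:])" unfolding cas asr by (simp add: o_def)
  also have "\<dots> = map_poly complex_of_real (\<Prod>a\<leftarrow>rs. [:- a, 1:])"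
    by (simp add: R.hom_prod_list o_def)
  finally have "char_poly A = (\<Prod>a\<leftarrow>rs. [:- a, 1:])" by (rule R.injectivity)
  then show ?thesis by auto
qed

lemma spectral:
  fixes A :: "real mat"
  assumes A: "A \<in> carrier_mat n n" and sym: "transpose_mat A = A"
  shows "sorted_wrt (\<ge>) (eigs_desc A)" "length (eigs_desc A) = n"
    "char_poly A = (\<Prod>a\<leftarrow>eigs_desc A. [:- a, 1:])"
    "\<exists>U. orth n U \<and> A = sp n U (eig A)"
proof -
  obtain rs where "char_poly A = (\<Prod>a\<leftarrow>rs. [:- a, 1:])" using symmetric_splits[OF A sym] by auto
  from eigs_desc_exists[OF this]
  have s: "sorted_wrt (\<ge>) (eigs_desc A)" and c: "char_poly A = (\<Prod>a\<leftarrow>eigs_desc A. [:- a, 1:])" by auto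
  show "sorted_wrt (\<ge>) (eigs_desc A)" by (rule s)
  show "char_poly A = (\<Prod>a\<leftarrow>eigs_desc A. [:- a, 1:])" by (rule c)
  show "length (eigs_desc A) = n"
    using degree_monic_char_poly[OF A] degree_linear_factors[of uminus "eigs_desc A"] c by simp
  have "eig A = (\<lambda>i. eigs_desc A ! i)" by (simp add: eig_def[abs_def])
  then show "\<exists>U. orth n U \<and> A = sp n U (eig A)" using spectral_aux[OF A sym c] by simp
qed



lemma eig_antitone:
  assumes A: "A \<in> carrier_mat n n" and sym: "transpose_mat A = A" and ij: "i \<le> j" "j < n"
  shows "eig A j \<le> eig A i"
proof (cases "i = j")
  case False
  then have "i < j" using ij by simp
  then show ?thesis using spectral(1,2)[OF A sym] ij unfolding eig_def by (simp add: sorted_wrt_iff_nth_less)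
qed simp

lemma eig_of_sp:
  assumes U: "orth n U" and mono: "\<And>i j. i \<le> j \<Longrightarrow> j < n \<Longrightarrow> \<mu> j \<le> \<mu> i" and i: "i < n"
  shows "eig (sp n U \<mu>) i = \<mu> i"
proof -
  have Uc: "U \<in> carrier_mat n n" using U by (simp add: orth_def)
  let ?D = "diagm n \<mu>"
  have sim: "similar_mat (sp n U \<mu>) ?D"
    unfolding similar_mat_def similar_mat_wit_def
    by (rule exI[of _ U], rule exI[of _ "transpose_mat U"], insert Uc orth_right[OF U] U,
      auto simp: orth_def sp_def Let_def)
  have ut: "upper_triangular ?D" by (auto simp: upper_triangular_def diagm_def)
  have "char_poly (sp n U \<mu>) = char_poly ?D" by (rule char_poly_similar[OF sim])
  also have "\<dots> = (\<Prod>a\<leftarrow>diag_mat ?D. [:- a, 1:])" by (rule char_poly_upper_triangular[OF diagm_carrier ut])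
  also have "diag_mat ?D = map \<mu> [0..<n]" by (rule nth_equalityI, auto simp: diag_mat_def diagm_def)
  finally have cp: "char_poly (sp n U \<mu>) = (\<Prod>a\<leftarrow>map \<mu> [0..<n]. [:- a, 1:])" .
  have s: "sorted_wrt (\<ge>) (map \<mu> [0..<n])" by (auto simp: sorted_wrt_iff_nth_less intro: mono)
  have "eigs_desc (sp n U \<mu>) = map \<mu> [0..<n]" by (rule eigs_desc_eq[OF s cp])
  then show ?thesis using i by (simp add: eig_def)
qed

lemma trace_eig:
  assumes A: "A \<in> carrier_mat n n" and sym: "transpose_mat A = A"
  shows "tr A = (\<Sum>i<n. eig A i)"
proof -
  obtain U where U: "orth n U" and AU: "A = sp n U (eig A)" using spectral(4)[OF A sym] by auto
  show ?thesis by (subst AU, rule tr_sp[OF U])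
qed

lemma eig_shift:
  assumes A: "A \<in> carrier_mat n n" and sym: "transpose_mat A = A" and i: "i < n"
  shows "eig (A + c \<cdot>\<^sub>m 1\<^sub>m n) i = eig A i + c"
proof -
  obtain U where U: "orth n U" and AU: "A = sp n U (eig A)" using spectral(4)[OF A sym] by auto
  have Uc: "U \<in> carrier_mat n n" using U by (simp add: orth_def)
  have "A + c \<cdot>\<^sub>m 1\<^sub>m n = sp n U (\<lambda>k. eig A k + c)"
    using AU sp_const[OF U, of c] sp_add[OF Uc, of "eig A" "\<lambda>k. c"] by simp
  moreover have "eig (sp n U (\<lambda>k. eig A k + c)) i = eig A i + c"
    by (rule eig_of_sp[OF U _ i], insert eig_antitone[OF A sym], simp)
  ultimately show ?thesis by simp
qed

lemma coord_scalar: "U \<in> carrier_mat n n \<Longrightarrow> k < n \<Longrightarrow> z \<in> carrier_vec n \<Longrightarrow> coord n U z k = col U k \<bullet> z"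
  by (simp add: coord_def scalar_prod_def lessThan_atLeast0 mult.commute)

lemma eig_mono:
  assumes X: "X \<in> carrier_mat n n" and symX: "transpose_mat X = X"
    and V: "orth n V" and g: "\<And>k. k < n \<Longrightarrow> g k \<ge> 0"
    and symY: "transpose_mat (X + sp n V g) = X + sp n V g"
    and j: "j < n"
  shows "eig X j \<le> eig (X + sp n V g) j"
proof -
  define Y where "Y = X + sp n V g"
  have Vc: "V \<in> carrier_mat n n" using V by (simp add: orth_def)
  have Y: "Y \<in> carrier_mat n n" using X Vc by (simp add: Y_def)
  have symY': "transpose_mat Y = Y" using symY by (simp add: Y_def)
  obtain U where U: "orth n U" and XU: "X = sp n U (eig X)" using spectral(4)[OF X symX] by auto
  obtain W where W: "orth n W" and YW: "Y = sp n W (eig Y)" using spectral(4)[OF Y symY'] by auto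
  have Uc: "U \<in> carrier_mat n n" using U by (simp add: orth_def)
  have Wc: "W \<in> carrier_mat n n" using W by (simp add: orth_def)
  define f where "f = (\<lambda>r. if r = j then 0\<^sub>v n else if r < j then col W r else col U r)"
  define M where "M = mat\<^sub>r n n f"
  have "det M = 0" unfolding M_def f_def
    by (rule det_row_0[OF j], insert Uc Wc, auto)
  then obtain z where z: "z \<in> carrier_vec n" "z \<noteq> 0\<^sub>v n" and Mz: "M *\<^sub>v z = 0\<^sub>v n"
    using det_0_iff_vec_prod_zero[of M n] by (auto simp: M_def)
  have fr: "f r \<bullet> z = 0" if "r < n" for r
  proof -
    have "(M *\<^sub>v z) $ r = 0" using Mz that by simp
    moreover have "(M *\<^sub>v z) $ r = f r \<bullet> z" using that Uc Wc by (simp add: M_def f_def)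
    ultimately show ?thesis by simp
  qed
  have cW: "coord n W z k = 0" if "k < j" for k
    using fr[of k] that j coord_scalar[OF Wc _ z(1), of k] by (simp add: f_def)
  have cU: "coord n U z k = 0" if "j < k" "k < n" for k
    using fr[of k] that coord_scalar[OF Uc _ z(1), of k] by (simp add: f_def)
  have zz: "z \<bullet> z > 0" by (rule real_self_scalar_pos[OF z])
  have "eig X j * (z \<bullet> z) = (\<Sum>k<n. eig X j * (coord n U z k)^2)"
    by (simp only: sum_distrib_left[symmetric] coord_norm[OF U z(1)])
  also have "\<dots> \<le> (\<Sum>k<n. eig X k * (coord n U z k)^2)"
  proof (rule sum_mono)
    fix k assume k: "k \<in> {..<n}"
    show "eig X j * (coord n U z k)^2 \<le> eig X k * (coord n U z k)^2"
    proof (cases "k \<le> j")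
      case True
      then show ?thesis using eig_antitone[OF X symX True j] by (simp add: mult_right_mono)
    next
      case False
      then show ?thesis using cU[of k] k by simp
    qed
  qed
  also have "\<dots> = z \<bullet> (X *\<^sub>v z)" using qf_sp[OF Uc z(1), of "eig X"] unfolding XU[symmetric] by simp
  also have "\<dots> \<le> z \<bullet> (X *\<^sub>v z) + z \<bullet> (sp n V g *\<^sub>v z)"
    using qf_sp[OF Vc z(1), of g] g by (auto intro!: sum_nonneg)
  also have "\<dots> = z \<bullet> (Y *\<^sub>v z)"
    unfolding Y_def using X Vc z
    by (simp add: add_mult_distrib_mat_vec[OF X sp_carrier[OF Vc] z(1)] scalar_prod_add_distrib[OF z(1) mult_mat_vec_carrier[OF X z(1)] mult_mat_vec_carrier[OF sp_carrier[OF Vc] z(1)]])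
  also have "\<dots> = (\<Sum>k<n. eig Y k * (coord n W z k)^2)" using qf_sp[OF Wc z(1), of "eig Y"] unfolding YW[symmetric] by simp
  also have "\<dots> \<le> (\<Sum>k<n. eig Y j * (coord n W z k)^2)"
  proof (rule sum_mono)
    fix k assume k: "k \<in> {..<n}"
    show "eig Y k * (coord n W z k)^2 \<le> eig Y j * (coord n W z k)^2"
    proof (cases "j \<le> k")
      case True
      then show ?thesis using eig_antitone[OF Y symY' True] k by (simp add: mult_right_mono)
    next
      case False
      then show ?thesis using cW[of k] by simp
    qed
  qed
  also have "\<dots> = eig Y j * (z \<bullet> z)"
    by (simp only: sum_distrib_left[symmetric] coord_norm[OF W z(1)])
  finally have "eig X j * (z \<bullet> z) \<le> eig Y j * (z \<bullet> z)" .
  then show ?thesis using zz by (simp add: Y_def)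
qed



lemma lidskii:
  assumes A: "A \<in> carrier_mat n n" and symA: "transpose_mat A = A"
    and B: "B \<in> carrier_mat n n" and symB: "transpose_mat B = B"
    and S: "S \<subseteq> {..<n}" and k: "card S = k" "0 < k"
  shows "(\<Sum>t\<in>S. eig (A + B) t - eig A t) \<le> (\<Sum>t<k. eig B t)"
proof -
  obtain V where V: "orth n V" and BV: "B = sp n V (eig B)" using spectral(4)[OF B symB] by auto
  have Vc: "V \<in> carrier_mat n n" using V by (simp add: orth_def)
  have kn: "k \<le> n" using card_mono[OF _ S] k by simp
  define \<beta> where "\<beta> = eig B"
  define s where "s = \<beta> (k - 1)"
  define \<beta>' where "\<beta>' = (\<lambda>i. max (\<beta> i) s)"
  define B' where "B' = sp n V \<beta>'"
  have B': "B' \<in> carrier_mat n n" using Vc by (simp add: B'_def)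
  have symB': "transpose_mat B' = B'" unfolding B'_def by (rule sp_symm[OF Vc])
  have symAB: "transpose_mat (A + B) = A + B" using transpose_add[OF A B] symA symB by simp
  have symAB': "transpose_mat (A + B') = A + B'" using transpose_add[OF A B'] symA symB' by simp
  have e1: "A + B' = (A + B) + sp n V (\<lambda>i. \<beta>' i - \<beta> i)"
  proof -
    have "B + sp n V (\<lambda>i. \<beta>' i - \<beta> i) = B'" unfolding B'_def \<beta>_def
      by (subst BV, subst sp_add[OF Vc], simp)
    then show ?thesis using A B Vc by (simp add: assoc_add_mat[of _ n n])
  qed
  define C where "C = sp n V (\<lambda>i. s)"
  have C: "C \<in> carrier_mat n n" using Vc by (simp add: C_def)
  have e2: "A + B' = (A + C) + sp n V (\<lambda>i. \<beta>' i - s)"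
  proof -
    have "C + sp n V (\<lambda>i. \<beta>' i - s) = B'" unfolding B'_def C_def
      by (subst sp_add[OF Vc], simp)
    then show ?thesis using A C Vc by (simp add: assoc_add_mat[of _ n n])
  qed
  have Cs: "C = s \<cdot>\<^sub>m 1\<^sub>m n" unfolding C_def by (rule sp_const[OF V])
  have symAC: "transpose_mat (A + C) = A + C" using transpose_add[OF A C] symA sp_symm[OF Vc] by (simp add: C_def)
  have mono1: "eig (A + B) t \<le> eig (A + B') t" if "t < n" for t
    unfolding e1 by (rule eig_mono[OF _ symAB V _ _ that], insert A B symAB' e1,
      auto simp: \<beta>'_def)
  have mono2: "eig A t + s \<le> eig (A + B') t" if "t < n" for t
  proof -
    have "eig (A + C) t \<le> eig (A + B') t"
      unfolding e2 by (rule eig_mono[OF _ symAC V _ _ that], insert A C symAB' e2,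
        auto simp: \<beta>'_def)
    then show ?thesis using eig_shift[OF A symA that, of s] Cs by simp
  qed
  have tr: "(\<Sum>t<n. eig (A + B') t) = (\<Sum>t<n. eig A t) + (\<Sum>t<n. \<beta>' t)"
  proof -
    have "(\<Sum>t<n. eig (A + B') t) = tr (A + B')" by (rule trace_eig[symmetric], insert A B' symAB', auto)
    also have "\<dots> = tr A + tr B'" by (rule tr_add[OF A B'])
    also have "tr A = (\<Sum>t<n. eig A t)" by (rule trace_eig[OF A symA])
    also have "tr B' = (\<Sum>t<n. \<beta>' t)" unfolding B'_def by (rule tr_sp[OF V])
    finally show ?thesis .
  qed
  define d where "d = (\<lambda>t. eig (A + B') t - eig A t)"
  have h1: "(\<Sum>t\<in>S. eig (A + B) t - eig A t) \<le> (\<Sum>t\<in>S. d t)"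
    by (rule sum_mono, insert mono1 S, auto simp: d_def)
  have h2: "(\<Sum>t\<in>S. d t) = (\<Sum>t<n. d t) - (\<Sum>t\<in>{..<n} - S. d t)"
    using sum.subset_diff[OF S, of d] by simp
  have h3: "(\<Sum>t<n. d t) = (\<Sum>t<n. \<beta>' t)" using tr by (simp add: d_def sum_subtractf)
  have h4: "(\<Sum>t\<in>{..<n} - S. s) \<le> (\<Sum>t\<in>{..<n} - S. d t)"
  proof (rule sum_mono)
    fix t assume "t \<in> {..<n} - S"
    then have "eig A t + s \<le> eig (A + B') t" using mono2 by auto
    then show "s \<le> d t" by (simp add: d_def)
  qed
  have h5: "(\<Sum>t\<in>{..<n} - S. s) = real (n - k) * s"
    using card_Diff_subset[OF _ S] k by (simp add: finite_subset[OF S])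
  have h6: "(\<Sum>t<n. \<beta>' t) = (\<Sum>t<k. \<beta> t) + real (n - k) * s"
  proof -
    have "(\<Sum>t<n. \<beta>' t) = (\<Sum>t\<in>{0..<k}. \<beta>' t) + (\<Sum>t\<in>{k..<n}. \<beta>' t)"
      using sum.atLeastLessThan_concat[of 0 k n \<beta>'] kn by (simp add: lessThan_atLeast0)
    also have "(\<Sum>t\<in>{0..<k}. \<beta>' t) = (\<Sum>t<k. \<beta> t)" unfolding lessThan_atLeast0[symmetric]
    proof (rule sum.cong[OF refl])
      fix t assume "t \<in> {..<k}"
      then have "\<beta> (k - 1) \<le> \<beta> t" unfolding \<beta>_def using eig_antitone[OF B symB, of t "k - 1"] kn k by auto
      then show "\<beta>' t = \<beta> t" by (simp add: \<beta>'_def s_def)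
    qed
    also have "(\<Sum>t\<in>{k..<n}. \<beta>' t) = (\<Sum>t\<in>{k..<n}. s)"
    proof (rule sum.cong[OF refl])
      fix t assume "t \<in> {k..<n}"
      then have "\<beta> t \<le> \<beta> (k - 1)" unfolding \<beta>_def using eig_antitone[OF B symB, of "k - 1" t] k by auto
      then show "\<beta>' t = s" by (simp add: \<beta>'_def s_def)
    qed
    also have "\<dots> = real (n - k) * s" by simp
    finally show ?thesis .
  qed
  show ?thesis using h1 h2 h3 h4 h5 h6 unfolding \<beta>_def by linarith
qed



lemma abel_aux:
  fixes c z :: "nat \<Rightarrow> real"
  assumes "\<And>i j. i \<le> j \<Longrightarrow> j < Suc m \<Longrightarrow> c j \<le> c i"
    and "\<And>k. k < Suc m \<Longrightarrow> 0 \<le> (\<Sum>i<Suc k. z i)"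
  shows "c m * (\<Sum>i<Suc m. z i) \<le> (\<Sum>i<Suc m. c i * z i)"
  using assms
proof (induction m)
  case 0
  then show ?case by simp
next
  case (Suc m)
  have IH: "c m * (\<Sum>i<Suc m. z i) \<le> (\<Sum>i<Suc m. c i * z i)"
    by (rule Suc.IH, insert Suc.prems, auto)
  have Z: "0 \<le> (\<Sum>i<Suc m. z i)" using Suc.prems(2)[of m] by simp
  have cm: "c (Suc m) \<le> c m" using Suc.prems(1)[of m "Suc m"] by simp
  have "c (Suc m) * (\<Sum>i<Suc m. z i) \<le> c m * (\<Sum>i<Suc m. z i)" by (rule mult_right_mono[OF cm Z])
  then show ?case using IH by (simp add: distrib_left)
qed

theorem lemma6p1:
  fixes A B :: "real mat" and c :: "nat \<Rightarrow> real" and \<sigma> :: "nat \<Rightarrow> nat" and m :: nat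
  assumes "A \<in> carrier_mat m m" and "B \<in> carrier_mat m m"
    and "transpose_mat A = A" and "transpose_mat B = B"
    and "\<And>i j. i \<le> j \<Longrightarrow> j < m \<Longrightarrow> c j \<le> c i"
    and "\<sigma> permutes {..<m}"
  shows "(\<Sum>j<m. c (\<sigma> j) * eig (A + B) j)
           \<le> (\<Sum>j<m. c (\<sigma> j) * eig A j) + (\<Sum>j<m. c j * eig B j)"
proof (cases m)
  case 0
  then show ?thesis by simp
next
  case (Suc m1)
  note A = assms(1) and B = assms(2) and symA = assms(3) and symB = assms(4) and cmono = assms(5) and perm = assms(6)
  define xd where "xd = (\<lambda>j. eig (A + B) j - eig A j)"
  define tau where "tau = inv_into UNIV \<sigma>"
  have tperm: "tau permutes {..<m}" unfolding tau_def by (rule permutes_inv[OF perm])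
  have st: "\<sigma> (tau i) = i" for i unfolding tau_def using permutes_inverses(1)[OF perm] .
  have tinj: "inj_on tau X" for X using permutes_inj_on[OF tperm] .
  have reidx: "(\<Sum>j\<in>tau ` X. h j) = (\<Sum>i\<in>X. h (tau i))" for h :: "nat \<Rightarrow> real" and X
    using sum.reindex[OF tinj, of h] by simp
  have timg: "tau ` {..<m} = {..<m}" by (rule permutes_image[OF tperm])
  have symAB: "transpose_mat (A + B) = A + B" using transpose_add[OF A B] symA symB by simp
  have AB: "A + B \<in> carrier_mat m m" using A B by simp
  have part: "(\<Sum>i<Suc k. xd (tau i)) \<le> (\<Sum>i<Suc k. eig B i)" if k: "k < m" for k
  proof -
    have "(\<Sum>i<Suc k. xd (tau i)) = (\<Sum>j\<in>tau ` {..<Suc k}. xd j)" by (rule reidx[symmetric])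
    also have "\<dots> \<le> (\<Sum>t<Suc k. eig B t)" unfolding xd_def
    proof (rule lidskii[OF A symA B symB])
      show "tau ` {..<Suc k} \<subseteq> {..<m}" using timg k by auto
      show "card (tau ` {..<Suc k}) = Suc k" using card_image[OF tinj] by simp
    qed simp
    finally show ?thesis .
  qed
  have total: "(\<Sum>i<m. xd (tau i)) = (\<Sum>i<m. eig B i)"
  proof -
    have "(\<Sum>i<m. xd (tau i)) = (\<Sum>j\<in>tau ` {..<m}. xd j)" by (rule reidx[symmetric])
    also have "\<dots> = (\<Sum>j<m. xd j)" using timg by simp
    also have "\<dots> = tr (A + B) - tr A" unfolding xd_def sum_subtractf
      using trace_eig[OF AB symAB] trace_eig[OF A symA] by simp
    also have "\<dots> = tr B" using tr_add[OF A B] by simp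
    also have "\<dots> = (\<Sum>i<m. eig B i)" by (rule trace_eig[OF B symB])
    finally show ?thesis .
  qed
  define z where "z = (\<lambda>i. eig B i - xd (tau i))"
  have "c m1 * (\<Sum>i<Suc m1. z i) \<le> (\<Sum>i<Suc m1. c i * z i)"
  proof (rule abel_aux)
    show "c j \<le> c i" if "i \<le> j" "j < Suc m1" for i j using cmono that Suc by simp
    show "0 \<le> (\<Sum>i<Suc k. z i)" if "k < Suc m1" for k
      using part[of k] that Suc by (simp add: z_def sum_subtractf)
  qed
  moreover have "(\<Sum>i<Suc m1. z i) = 0" using total Suc by (simp add: z_def sum_subtractf)
  ultimately have "0 \<le> (\<Sum>i<m. c i * z i)" using Suc by simp
  then have key: "(\<Sum>i<m. c i * xd (tau i)) \<le> (\<Sum>i<m. c i * eig B i)"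
    by (simp add: z_def right_diff_distrib sum_subtractf)
  have "(\<Sum>j<m. c (\<sigma> j) * xd j) = (\<Sum>j\<in>tau ` {..<m}. c (\<sigma> j) * xd j)" using timg by simp
  also have "\<dots> = (\<Sum>i<m. c i * xd (tau i))" by (simp add: reidx st)
  finally have "(\<Sum>j<m. c (\<sigma> j) * xd j) \<le> (\<Sum>i<m. c i * eig B i)" using key by simp
  then show ?thesis by (simp add: xd_def right_diff_distrib sum_subtractf)
qed

end
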